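(* Let $A(x)$ and $B(x)\neq 0$ be rational functions with real coefficients. Suppose all solutions of the ordinary differential equation $$f(x)A(x)+f'(x)B(x)=1$$ are algebraic functions. Then the general solution of this equation can be written as $$f(x)=r(x)+\sigma q^{1/N}(x),\qquad \sigma\in\mathbb{R},$$ where $N\in\mathbb{N}$ and $r(x),q(x)$ are rational functions (independent of $\sigma$). *)

theory Defs
  imports "HOL-Analysis.Analysis" "HOL-Computational_Algebra.Polynomial"
begin

definition rat_eval :: "real poly \<Rightarrow> real poly \<Rightarrow> real \<Rightarrow> real" where
  "rat_eval p q x = poly p x / poly q x"

text \<open>Bivariate real polynomial P(x,y): a polynomial in y whose coefficients are polynomials in x.\<close>
definition eval2 :: "real poly poly \<Rightarrow> real \<Rightarrow> real \<Rightarrow> real" where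
  "eval2 P x y = poly (map_poly (\<lambda>c. poly c x) P) y"

definition algebraic_on :: "real set \<Rightarrow> (real \<Rightarrow> real) \<Rightarrow> bool" where
  "algebraic_on I f \<longleftrightarrow> (\<exists>P :: real poly poly. P \<noteq> 0 \<and> (\<forall>x\<in>I. eval2 P x (f x) = 0))"

text \<open>Open interval ]a,b[ on which A = pA/qA and B = pB/qB are defined and B does not vanish.\<close>
definition admissible :: "real poly \<Rightarrow> real poly \<Rightarrow> real poly \<Rightarrow> real \<Rightarrow> real \<Rightarrow> bool" where
  "admissible qA pB qB a b \<longleftrightarrow> a < b \<and>
     (\<forall>x\<in>{a<..<b}. poly qA x \<noteq> 0 \<and> poly pB x \<noteq> 0 \<and> poly qB x \<noteq> 0)"

definition ode_solution ::
  "real poly \<Rightarrow> real poly \<Rightarrow> real poly \<Rightarrow> real poly \<Rightarrow> real set \<Rightarrow> (real \<Rightarrow> real) \<Rightarrow> bool" where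
  "ode_solution pA qA pB qB I f \<longleftrightarrow>
     (\<forall>x\<in>I. \<exists>d. (f has_real_derivative d) (at x) \<and>
        f x * rat_eval pA qA x + d * rat_eval pB qB x = 1)"

end

theory Submission
  imports Defs
begin


lemma eval2_sum:
  assumes "degree P \<le> n"
  shows "eval2 P x y = (\<Sum>k\<le>n. poly (coeff P k) x * y ^ k)"
proof -
  let ?M = "map_poly (\<lambda>c. poly c x) P"
  have cm: "coeff ?M k = poly (coeff P k) x" for k by (simp add: coeff_map_poly)
  have dM: "degree ?M \<le> n"
    using assms by (intro degree_le) (auto simp: cm coeff_eq_0)
  have "eval2 P x y = (\<Sum>k\<le>degree ?M. coeff ?M k * y^k)"
    unfolding eval2_def by (rule poly_altdef)
  also have "\<dots> = (\<Sum>k\<le>n. coeff ?M k * y^k)"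
  proof (rule sum.mono_neutral_left)
    show "finite {..n}" by simp
    show "{..degree ?M} \<subseteq> {..n}" using dM by auto
    show "\<forall>i\<in>{..n} - {..degree ?M}. coeff ?M i * y ^ i = 0"
      by (auto simp: coeff_eq_0)
  qed
  also have "\<dots> = (\<Sum>k\<le>n. poly (coeff P k) x * y ^ k)" by (simp add: cm)
  finally show ?thesis .
qed

definition mkp :: "(nat \<Rightarrow> real poly) \<Rightarrow> nat \<Rightarrow> real poly poly" where
  "mkp e n = (\<Sum>k\<le>n. monom (e k) k)"

lemma coeff_mkp: "coeff (mkp e n) k = (if k \<le> n then e k else 0)"
  unfolding mkp_def by (simp add: coeff_sum coeff_monom)

lemma degree_mkp: "degree (mkp e n) \<le> n"
  by (intro degree_le) (simp add: coeff_mkp)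

lemma eval2_mkp: "eval2 (mkp e n) x y = (\<Sum>k\<le>n. poly (e k) x * y ^ k)"
  by (simp add: eval2_sum[OF degree_mkp] coeff_mkp)

lemma poly_zero_on_Ioo:
  fixes p :: "real poly"
  assumes "a < b" "\<forall>x\<in>{a<..<b}. poly p x = 0"
  shows "p = 0"
proof (rule ccontr)
  assume "p \<noteq> 0"
  hence "finite {x. poly p x = 0}" by (rule poly_roots_finite)
  moreover have "{a<..<b} \<subseteq> {x. poly p x = 0}" using assms by auto
  ultimately have "finite {a<..<b}" by (rule finite_subset[rotated])
  with infinite_Ioo[OF assms(1)] show False by simp
qed

definition vs :: "(real \<Rightarrow> real) \<Rightarrow> real \<Rightarrow> real \<Rightarrow> real poly poly \<Rightarrow> bool" where
  "vs \<phi> a b P \<longleftrightarrow> P \<noteq> 0 \<and> (\<exists>c d. a \<le> c \<and> c < d \<and> d \<le> b \<and> (\<forall>x\<in>{c<..<d}. eval2 P x (\<phi> x) = 0))"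

lemma sum_shift_deriv:
  fixes a :: "nat \<Rightarrow> real"
  assumes "a (Suc m) = 0"
  shows "(\<Sum>k\<le>m. of_nat (Suc k) * a (Suc k) * y ^ k) = (\<Sum>k\<le>m. of_nat k * a k * y ^ (k - 1))"
proof -
  have "(\<Sum>k\<le>Suc m. of_nat k * a k * y ^ (k - 1)) = 0 + (\<Sum>k\<le>m. of_nat (Suc k) * a (Suc k) * y ^ k)"
    by (subst sum.atMost_Suc_shift) simp
  also have "(\<Sum>k\<le>Suc m. of_nat k * a k * y ^ (k - 1)) = (\<Sum>k\<le>m. of_nat k * a k * y ^ (k - 1))"
    using assms by simp
  finally show ?thesis by simp
qed

lemma min_ident:
  fixes D bb cc :: "real poly" and \<phi> :: "real \<Rightarrow> real"
  assumes deriv: "\<forall>x\<in>{a<..<b}. \<exists>d. (\<phi> has_real_derivative d) (at x) \<and> poly D x * d = poly bb x + poly cc x * \<phi> x"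
    and vsP: "vs \<phi> a b P"
    and minP: "\<forall>Q. vs \<phi> a b Q \<longrightarrow> degree P \<le> degree Q"
  shows "degree P \<ge> 1 \<and> (\<forall>k. coeff P (degree P) * (D * pderiv (coeff P k) + of_nat (Suc k) * bb * coeff P (Suc k) + of_nat k * cc * coeff P k) = (D * pderiv (coeff P (degree P)) + of_nat (degree P) * cc * coeff P (degree P)) * coeff P k)"
proof -
  define m where "m = degree P"
  define A where "A k = coeff P k" for k
  obtain c d where cd: "a \<le> c" "c < d" "d \<le> b" and van: "\<forall>x\<in>{c<..<d}. eval2 P x (\<phi> x) = 0" and P0: "P \<noteq> 0"
    using vsP unfolding vs_def by blast
  have van2: "(\<Sum>k\<le>m. poly (A k) x * \<phi> x ^ k) = 0" if "x \<in> {c<..<d}" for x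
    using van that eval2_sum[of P m x "\<phi> x"] by (simp add: m_def A_def)
  have m1: "m \<ge> 1"
  proof (rule ccontr)
    assume "\<not> m \<ge> 1" hence m0: "m = 0" by simp
    have "poly (A 0) x = 0" if "x \<in> {c<..<d}" for x using van2[OF that] m0 by simp
    hence "A 0 = 0" using poly_zero_on_Ioo[OF cd(2)] by blast
    hence "coeff P k = 0" for k using m0 by (cases k) (auto simp: A_def m_def coeff_eq_0)
    hence "P = 0" by (intro poly_eqI) simp
    with P0 show False by simp
  qed
  have Am: "A (Suc m) = 0" by (simp add: A_def m_def coeff_eq_0)
  define C where "C = D * pderiv (A m) + of_nat m * cc * A m"
  define e where "e k = A m * (D * pderiv (A k) + of_nat (Suc k) * bb * A (Suc k) + of_nat k * cc * A k) - C * A k" for k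
  define R where "R = mkp e m"
  have em: "e m = 0" by (simp add: e_def C_def Am algebra_simps)
  have evR: "eval2 R x (\<phi> x) = 0" if x: "x \<in> {c<..<d}" for x
  proof -
    from x cd have xab: "x \<in> {a<..<b}" by auto
    then obtain dp where dp: "(\<phi> has_real_derivative dp) (at x)" and rel: "poly D x * dp = poly bb x + poly cc x * \<phi> x"
      using deriv by blast
    define F where "F t = (\<Sum>k\<le>m. poly (A k) t * \<phi> t ^ k)" for t
    have dF: "(F has_real_derivative (\<Sum>k\<le>m. poly (pderiv (A k)) x * \<phi> x ^ k + poly (A k) x * (of_nat k * \<phi> x ^ (k - 1) * dp))) (at x)"
      unfolding F_def
    proof (rule DERIV_sum)
      fix k assume "k \<in> {..m}"
      have "((\<lambda>t. \<phi> t ^ k) has_real_derivative (of_nat k * \<phi> x ^ (k - 1) * dp)) (at x)"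
        by (rule DERIV_power[OF dp, THEN DERIV_cong]) (simp add: algebra_simps)
      from DERIV_mult[OF poly_DERIV[of "A k" x] this]
      show "((\<lambda>t. poly (A k) t * \<phi> t ^ k) has_real_derivative poly (pderiv (A k)) x * \<phi> x ^ k + poly (A k) x * (of_nat k * \<phi> x ^ (k - 1) * dp)) (at x)"
        by (rule DERIV_cong) (simp add: algebra_simps)
    qed
    have dF0: "(F has_real_derivative 0) (at x)"
    proof (rule has_field_derivative_transform_within_open[of "\<lambda>_. 0" 0 x "{c<..<d}"])
      show "((\<lambda>_. 0) has_real_derivative 0) (at x)" by simp
      show "open {c<..<d}" by simp
      show "x \<in> {c<..<d}" by fact
      show "\<And>t. t \<in> {c<..<d} \<Longrightarrow> 0 = F t" using van2 by (simp add: F_def)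
    qed
    have S0: "(\<Sum>k\<le>m. poly (pderiv (A k)) x * \<phi> x ^ k + poly (A k) x * (of_nat k * \<phi> x ^ (k - 1) * dp)) = 0"
      using DERIV_unique[OF dF dF0] .
    define y where "y = \<phi> x"
    define S1 where "S1 = (\<Sum>k\<le>m. poly D x * poly (pderiv (A k)) x * y ^ k)"
    define S2 where "S2 = (\<Sum>k\<le>m. of_nat k * poly cc x * poly (A k) x * y ^ k)"
    define S3 where "S3 = (\<Sum>k\<le>m. of_nat k * poly (A k) x * y ^ (k - 1))"
    have "poly D x * (\<Sum>k\<le>m. poly (pderiv (A k)) x * \<phi> x ^ k + poly (A k) x * (of_nat k * \<phi> x ^ (k - 1) * dp))
        = S1 + (\<Sum>k\<le>m. of_nat k * poly (A k) x * y ^ (k - 1) * (poly D x * dp))"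
      unfolding S1_def y_def sum_distrib_left sum.distrib[symmetric]
      by (rule sum.cong) (auto simp: algebra_simps)
    also have "(\<Sum>k\<le>m. of_nat k * poly (A k) x * y ^ (k - 1) * (poly D x * dp)) = poly bb x * S3 + S2"
      unfolding S2_def S3_def rel sum_distrib_left sum.distrib[symmetric]
    proof (rule sum.cong)
      fix k assume "k \<in> {..m}"
      show "of_nat k * poly (A k) x * y ^ (k - 1) * (poly bb x + poly cc x * \<phi> x) =
         poly bb x * (of_nat k * poly (A k) x * y ^ (k - 1)) + of_nat k * poly cc x * poly (A k) x * y ^ k"
      proof (cases k)
        case 0 then show ?thesis by simp
      next
        case (Suc j) then show ?thesis by (simp add: y_def algebra_simps)
      qed
    qed simp
    finally have E1: "S1 + (poly bb x * S3 + S2) = 0" using S0 by simp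
    have S3': "S3 = (\<Sum>k\<le>m. of_nat (Suc k) * poly (A (Suc k)) x * y ^ k)"
      unfolding S3_def using sum_shift_deriv[of "\<lambda>k. poly (A k) x" m y] Am by simp
    have "eval2 R x (\<phi> x) = (\<Sum>k\<le>m. poly (e k) x * y ^ k)" by (simp add: R_def eval2_mkp y_def)
    also have "\<dots> = poly (A m) x * (S1 + poly bb x * S3 + S2) - poly C x * F x"
      unfolding S1_def S2_def S3' F_def sum_distrib_left sum.distrib[symmetric] sum_subtractf[symmetric] y_def
      by (rule sum.cong) (auto simp: e_def algebra_simps)
    also have "\<dots> = 0" using E1 van2[OF x] by (simp add: F_def algebra_simps)
    finally show ?thesis .
  qed
  have R0: "R = 0"
  proof (rule ccontr)
    assume "R \<noteq> 0"
    hence "vs \<phi> a b R" unfolding vs_def using cd evR by blast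
    hence "m \<le> degree R" using minP by (simp add: m_def)
    moreover have "degree R \<le> m - 1"
      using m1 by (intro degree_le) (auto simp: R_def coeff_mkp em dest: le_neq_implies_less)
    ultimately show False using m1 by simp
  qed
  have "\<forall>k. A m * (D * pderiv (A k) + of_nat (Suc k) * bb * A (Suc k) + of_nat k * cc * A k) = C * A k"
  proof
    fix k
    show "A m * (D * pderiv (A k) + of_nat (Suc k) * bb * A (Suc k) + of_nat k * cc * A k) = C * A k"
    proof (cases "k \<le> m")
      case True
      have "coeff R k = 0" using R0 by simp
      with True show ?thesis by (simp add: R_def coeff_mkp e_def)
    next
      case False
      hence "A k = 0" "A (Suc k) = 0" by (auto simp: A_def m_def coeff_eq_0)
      then show ?thesis by simp
    qed
  qed
  then show ?thesis using m1 by (simp add: A_def C_def m_def)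
qed



lemma nonvan:
  fixes s D :: "real poly"
  assumes s0: "s \<noteq> 0" and dv: "s dvd D * pderiv s" and Dx: "poly D x \<noteq> 0"
  shows "poly s x \<noteq> 0"
proof
  assume r: "poly s x = 0"
  have o: "order x s = Suc (order x (pderiv s))" by (rule order_pderiv[OF s0 r])
  have "order x s \<le> degree s" by (rule order_degree[OF s0])
  hence "degree s \<noteq> 0" using o by simp
  hence ps: "pderiv s \<noteq> 0" by (simp add: pderiv_eq_0_iff)
  have D0: "D \<noteq> 0" using Dx by auto
  have oD: "order x D = 0" using Dx order_root[of D x] by auto
  have "order x s \<le> order x (D * pderiv s)"
    using dvd_imp_order_le[OF _ dv] D0 ps by simp
  also have "\<dots> = order x (pderiv s)" using order_mult[of D "pderiv s" x] D0 ps oD by simp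
  finally show False using o by simp
qed

lemma minpair:
  fixes u v :: "real poly"
  assumes v0: "v \<noteq> 0"
  obtains s1 s2 where "s2 \<noteq> 0" "s1 * v = s2 * u" "u \<noteq> 0 \<Longrightarrow> s1 \<noteq> 0"
    "\<And>x. \<not> (poly s1 x = 0 \<and> poly s2 x = 0)"
proof -
  define Pr where "Pr = (\<lambda>(s1::real poly, s2::real poly). s2 \<noteq> 0 \<and> s1 * v = s2 * u)"
  have "Pr (u, v)" using v0 by (simp add: Pr_def mult.commute)
  from ex_has_least_nat[of Pr "(u,v)" "\<lambda>p. degree (snd p)", OF this]
  obtain p where p: "Pr p" and pm: "\<forall>y. Pr y \<longrightarrow> degree (snd p) \<le> degree (snd y)" by blast
  obtain s1 s2 where ps: "p = (s1, s2)" by (cases p)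
  have s20: "s2 \<noteq> 0" and E: "s1 * v = s2 * u" using p ps by (auto simp: Pr_def)
  have nc: "\<not> (poly s1 x = 0 \<and> poly s2 x = 0)" for x
  proof
    assume "poly s1 x = 0 \<and> poly s2 x = 0"
    then obtain t1 t2 where t: "s1 = [:-x,1:] * t1" "s2 = [:-x,1:] * t2"
      by (auto simp: poly_eq_0_iff_dvd elim!: dvdE)
    have t20: "t2 \<noteq> 0" using s20 t by auto
    have "[:-x,1:] * (t1 * v) = [:-x,1:] * (t2 * u)" using E unfolding t by (simp only: mult.assoc)
    moreover have "[:-x,1:] \<noteq> (0::real poly)" by simp
    ultimately have "t1 * v = t2 * u" by (rule mult_left_cancel[THEN iffD1, rotated])
    hence "Pr (t1, t2)" using t20 by (simp add: Pr_def)
    hence "degree s2 \<le> degree t2" using pm ps by force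
    moreover have "degree s2 = Suc (degree t2)" unfolding t(2) using t20
      by (subst degree_mult_eq) auto
    ultimately show False by simp
  qed
  have "u \<noteq> 0 \<Longrightarrow> s1 \<noteq> 0" using E s20 v0 by auto
  with that s20 E nc show ?thesis by blast
qed

lemma wronsk_transfer:
  fixes s1 s2 u v :: "real poly"
  assumes E: "s1 * v = s2 * u"
  shows "v^2 * (pderiv s1 * s2 - s1 * pderiv s2) = s2^2 * (pderiv u * v - u * pderiv v)"
proof -
  have E': "pderiv s1 * v + s1 * pderiv v = pderiv s2 * u + s2 * pderiv u"
    using arg_cong[OF E, of pderiv] by (simp add: pderiv_mult algebra_simps)
  show ?thesis using E E' by algebra
qed

lemma eval2_add: "eval2 (P + Q) x y = eval2 P x y + eval2 Q x y"
proof -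
  have "map_poly (\<lambda>c. poly c x) (P + Q) = map_poly (\<lambda>c. poly c x) P + map_poly (\<lambda>c. poly c x) Q"
    by (intro poly_eqI) (simp add: coeff_map_poly)
  thus ?thesis by (simp add: eval2_def)
qed

lemma eval2_pCons: "eval2 (pCons a P) x y = poly a x + y * eval2 P x y"
  by (simp add: eval2_def map_poly_pCons)

lemma eval2_0 [simp]: "eval2 0 x y = 0" by (simp add: eval2_def)

lemma eval2_smult: "eval2 (smult a P) x y = poly a x * eval2 P x y"
  by (simp add: eval2_def map_poly_smult)

lemma eval2_one [simp]: "eval2 1 x y = 1" by (simp add: eval2_def)

lemma eval2_mult: "eval2 (P * Q) x y = eval2 P x y * eval2 Q x y"
  by (induction P) (simp_all add: eval2_add eval2_pCons eval2_smult algebra_simps)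

lemma eval2_const: "eval2 [:c:] x y = poly c x"
  by (simp add: eval2_pCons)

lemma eval2_lin: "eval2 [:c0, c1:] x y = poly c0 x + poly c1 x * y"
  by (simp add: eval2_pCons algebra_simps)

lemma eval2_power: "eval2 (P ^ n) x y = eval2 P x y ^ n"
  by (induction n) (simp_all add: eval2_mult eval2_pCons)

lemma eval2_sumset: "finite S \<Longrightarrow> eval2 (\<Sum>k\<in>S. F k) x y = (\<Sum>k\<in>S. eval2 (F k) x y)"
  by (induction S rule: finite_induct) (simp_all add: eval2_add)

lemma subst_alg:
  fixes P :: "real poly poly" and r1 r2 :: "real poly"
  assumes P0: "P \<noteq> 0" and r20: "r2 \<noteq> 0"
    and van: "\<forall>x\<in>I. eval2 P x (f x) = 0" and nz: "\<forall>x\<in>I. poly r2 x \<noteq> 0"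
  shows "\<exists>Q. Q \<noteq> 0 \<and> (\<forall>x\<in>I. eval2 Q x (f x - poly r1 x / poly r2 x) = 0)"
proof -
  define m where "m = degree P"
  define Q where "Q = (\<Sum>k\<le>m. [:coeff P k * r2 ^ (m - k):] * [:r1, r2:] ^ k)"
  have evQ: "eval2 Q x y = (\<Sum>k\<le>m. poly (coeff P k) x * poly r2 x ^ (m - k) * (poly r1 x + poly r2 x * y) ^ k)" for x y
    by (simp add: Q_def eval2_sumset eval2_mult eval2_const eval2_power eval2_lin eval2_smult)
  have key: "eval2 Q x y = poly r2 x ^ m * eval2 P x (y + poly r1 x / poly r2 x)" if "poly r2 x \<noteq> 0" for x y
  proof -
    have "eval2 P x (y + poly r1 x / poly r2 x) = (\<Sum>k\<le>m. poly (coeff P k) x * (y + poly r1 x / poly r2 x) ^ k)"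
      by (rule eval2_sum) (simp add: m_def)
    hence "poly r2 x ^ m * eval2 P x (y + poly r1 x / poly r2 x) =
       (\<Sum>k\<le>m. poly r2 x ^ m * (poly (coeff P k) x * (y + poly r1 x / poly r2 x) ^ k))"
      by (simp only: sum_distrib_left)
    also have "\<dots> = (\<Sum>k\<le>m. poly (coeff P k) x * poly r2 x ^ (m - k) * (poly r1 x + poly r2 x * y) ^ k)"
    proof (rule sum.cong)
      fix k assume "k \<in> {..m}"
      hence km: "poly r2 x ^ m = poly r2 x ^ (m - k) * poly r2 x ^ k"
        by (subst power_add[symmetric]) simp
      have e1: "poly r2 x * (y + poly r1 x / poly r2 x) = poly r1 x + poly r2 x * y"
        using that by (simp add: field_simps)
      have "poly r2 x ^ k * (y + poly r1 x / poly r2 x) ^ k = (poly r1 x + poly r2 x * y) ^ k"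
        unfolding power_mult_distrib[symmetric] e1 ..
      thus "poly r2 x ^ m * (poly (coeff P k) x * (y + poly r1 x / poly r2 x) ^ k) =
            poly (coeff P k) x * poly r2 x ^ (m - k) * (poly r1 x + poly r2 x * y) ^ k" 
        unfolding km by (simp only: mult.assoc mult.left_commute)
    qed (rule refl)
    finally show ?thesis unfolding evQ by (rule sym)
  qed
  have Q0: "Q \<noteq> 0"
  proof
    assume "Q = 0"
    have c0: "poly (coeff P k) x = 0" if "poly r2 x \<noteq> 0" for x k
    proof -
      have "eval2 P x z = 0" for z
        using key[OF that, of "z - poly r1 x / poly r2 x"] \<open>Q = 0\<close> that by simp
      hence "map_poly (\<lambda>c. poly c x) P = 0" unfolding eval2_def using poly_all_0_iff_0 by blast
      hence "coeff (map_poly (\<lambda>c. poly c x) P) k = 0" by simp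
      thus ?thesis by (simp add: coeff_map_poly)
    qed
    have "coeff P k = 0" for k
    proof (rule ccontr)
      assume ck: "coeff P k \<noteq> 0"
      have "UNIV \<subseteq> {x. poly (coeff P k) x = 0} \<union> {x. poly r2 x = 0}" using c0 by auto
      moreover have "finite ({x. poly (coeff P k) x = 0} \<union> {x. poly r2 x = 0})"
        using poly_roots_finite[OF ck] poly_roots_finite[OF r20] by simp
      ultimately have "finite (UNIV :: real set)" by (rule finite_subset)
      thus False by (simp add: infinite_UNIV_char_0)
    qed
    hence "P = 0" by (intro poly_eqI) simp
    with P0 show False by simp
  qed
  have "\<forall>x\<in>I. eval2 Q x (f x - poly r1 x / poly r2 x) = 0"
  proof
    fix x assume xI: "x \<in> I"
    have "eval2 Q x (f x - poly r1 x / poly r2 x) = poly r2 x ^ m * eval2 P x (f x - poly r1 x / poly r2 x + poly r1 x / poly r2 x)"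
      using nz xI by (intro key) auto
    also have "\<dots> = 0" using van xI by simp
    finally show "eval2 Q x (f x - poly r1 x / poly r2 x) = 0" .
  qed
  with Q0 show ?thesis by blast
qed

lemma root_deriv:
  assumes N: "0 < N" and z: "(z::real) \<noteq> 0"
  shows "DERIV (root N) z :> root N z / (of_nat N * z)"
proof -
  have rz: "root N z \<noteq> 0" using z N by simp
  have pw: "root N z ^ N = root N z ^ (N - Suc 0) * root N z" using N
    by (metis Suc_pred power_Suc2)
  show ?thesis
  proof (rule DERIV_real_root_generic[OF N z])
    assume "even N" "0 < z"
    hence "root N z ^ N = z" using N by simp
    thus "root N z / (of_nat N * z) = inverse (real N * root N z ^ (N - Suc 0))"
      using rz z N pw by (simp add: field_simps)
  next
    assume e: "even N" "z < 0"
    have "root N z ^ N = root N (-z) ^ N" using e(1) by (simp add: real_root_minus)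
    also have "\<dots> = -z" using e N by simp
    finally have "root N z ^ N = -z" .
    thus "root N z / (of_nat N * z) = - inverse (real N * root N z ^ (N - Suc 0))"
      using rz z N pw by (simp add: field_simps)
  next
    assume "odd N"
    hence "root N z ^ N = z" by (rule odd_real_root_pow)
    thus "root N z / (of_nat N * z) = inverse (real N * root N z ^ (N - Suc 0))"
      using rz z N pw by (simp add: field_simps)
  qed
qed

lemma ex_min:
  assumes "vs \<phi> a b P0"
  obtains P where "vs \<phi> a b P" "\<forall>Q. vs \<phi> a b Q \<longrightarrow> degree P \<le> degree Q"
  using ex_has_least_nat[of "vs \<phi> a b" P0 degree] assms by blast

lemma a0_nonzero:
  assumes vsP: "vs \<phi> a b P" and minP: "\<forall>Q. vs \<phi> a b Q \<longrightarrow> degree P \<le> degree Q"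
    and nz: "\<forall>x\<in>{a<..<b}. \<phi> x \<noteq> 0" and m1: "degree P \<ge> 1"
  shows "coeff P 0 \<noteq> 0"
proof
  assume a0: "coeff P 0 = 0"
  define m where "m = degree P"
  obtain c d where cd: "a \<le> c" "c < d" "d \<le> b" and van: "\<forall>x\<in>{c<..<d}. eval2 P x (\<phi> x) = 0" and P0: "P \<noteq> 0"
    using vsP unfolding vs_def by blast
  define P4 where "P4 = mkp (\<lambda>k. coeff P (Suc k)) (m - 1)"
  have ev: "eval2 P x y = y * eval2 P4 x y" for x y
  proof -
    have "eval2 P x y = (\<Sum>k\<le>Suc (m - 1). poly (coeff P k) x * y ^ k)"
      by (rule eval2_sum) (simp add: m_def)
    also have "\<dots> = (\<Sum>k\<le>m - 1. poly (coeff P (Suc k)) x * y ^ Suc k)"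
      by (subst sum.atMost_Suc_shift) (simp add: a0)
    also have "\<dots> = y * eval2 P4 x y" by (simp add: P4_def eval2_mkp sum_distrib_left algebra_simps)
    finally show ?thesis .
  qed
  have "coeff P4 (m - 1) = coeff P m" using m1 by (simp add: P4_def coeff_mkp m_def)
  hence P40: "P4 \<noteq> 0" using P0 by (auto simp: m_def)
  have "\<forall>x\<in>{c<..<d}. eval2 P4 x (\<phi> x) = 0"
    using van ev nz cd by fastforce
  hence "vs \<phi> a b P4" using P40 cd unfolding vs_def by blast
  hence "m \<le> degree P4" using minP by (simp add: m_def)
  moreover have "degree P4 \<le> m - 1" by (simp add: P4_def degree_mkp)
  ultimately show False using m1 by (simp add: m_def)
qed



lemma exist_sol:
  fixes gf bf :: "real \<Rightarrow> real"
  assumes cd: "c < d" "continuous_on {c..d} gf" "continuous_on {c..d} bf"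
  shows "\<exists>h f. \<forall>x\<in>{c<..<d}. (h has_real_derivative gf x * h x) (at x) \<and> h x > 0 \<and>
            (f has_real_derivative gf x * f x + bf x) (at x)"
proof -
  define G where "G x = integral {c..x} gf" for x
  have dG: "(G has_real_derivative gf x) (at x within {c..d})" if "x \<in> {c..d}" for x
    unfolding G_def[abs_def] by (rule integral_has_real_derivative[OF cd(2) that])
  define h where "h x = exp (G x)" for x
  have dh: "(h has_real_derivative exp (G x) * gf x) (at x within {c..d})" if "x \<in> {c..d}" for x
    unfolding h_def using DERIV_chain2[OF DERIV_exp dG[OF that]] by simp
  have ch: "continuous_on {c..d} h" using dh by (rule DERIV_continuous_on)
  have hpos: "h x > 0" for x by (simp add: h_def)
  have ci: "continuous_on {c..d} (\<lambda>t. bf t / h t)"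
    using hpos by (intro continuous_on_divide cd ch) (auto simp: less_le)
  define U where "U x = integral {c..x} (\<lambda>t. bf t / h t)" for x
  have dU: "(U has_real_derivative bf x / h x) (at x within {c..d})" if "x \<in> {c..d}" for x
    unfolding U_def[abs_def] by (rule integral_has_real_derivative[OF ci that])
  define f where "f x = h x * U x" for x
  have "\<forall>x\<in>{c<..<d}. (h has_real_derivative gf x * h x) (at x) \<and> h x > 0 \<and>
            (f has_real_derivative gf x * f x + bf x) (at x)"
  proof
    fix x assume x: "x \<in> {c<..<d}"
    hence xi: "x \<in> interior {c..d}" by simp
    have xc: "x \<in> {c..d}" using x by auto
    have at: "at x within {c..d} = at x" by (rule at_within_interior[OF xi])
    have dh': "(h has_real_derivative gf x * h x) (at x)"
      using dh[OF xc] unfolding at by (simp add: h_def mult.commute)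
    have dU': "(U has_real_derivative bf x / h x) (at x)" using dU[OF xc] unfolding at .
    have "(f has_real_derivative (gf x * h x) * U x + h x * (bf x / h x)) (at x)"
      unfolding f_def[abs_def] using DERIV_mult[OF dh' dU'] by simp
    moreover have "(gf x * h x) * U x + h x * (bf x / h x) = gf x * f x + bf x"
      using hpos[of x] by (simp add: f_def field_simps)
    ultimately show "(h has_real_derivative gf x * h x) (at x) \<and> h x > 0 \<and>
            (f has_real_derivative gf x * f x + bf x) (at x)" using dh' hpos by simp
  qed
  thus ?thesis by blast
qed

lemma rat_deriv:
  fixes s1 s2 D bb cc :: "real poly"
  assumes IR: "D * (pderiv s1 * s2 - s1 * pderiv s2) = cc * s1 * s2 + bb * s2^2"
    and s2x: "poly s2 x \<noteq> 0" and Dx: "poly D x \<noteq> 0"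
  shows "((\<lambda>t. poly s1 t / poly s2 t) has_real_derivative (poly bb x + poly cc x * (poly s1 x / poly s2 x)) / poly D x) (at x)"
proof -
  have d: "((\<lambda>t. poly s1 t / poly s2 t) has_real_derivative (poly (pderiv s1) x * poly s2 x - poly s1 x * poly (pderiv s2) x) / (poly s2 x * poly s2 x)) (at x)"
    by (rule DERIV_divide[OF poly_DERIV poly_DERIV s2x])
  have e: "poly D x * (poly (pderiv s1) x * poly s2 x - poly s1 x * poly (pderiv s2) x) = poly cc x * poly s1 x * poly s2 x + poly bb x * poly s2 x ^ 2"
    using arg_cong[OF IR, of "\<lambda>p. poly p x"] by simp
  have "(poly (pderiv s1) x * poly s2 x - poly s1 x * poly (pderiv s2) x) / (poly s2 x * poly s2 x) =
        (poly D x * (poly (pderiv s1) x * poly s2 x - poly s1 x * poly (pderiv s2) x)) / (poly D x * (poly s2 x * poly s2 x))"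
    using Dx by simp
  also have "\<dots> = (poly cc x * poly s1 x * poly s2 x + poly bb x * poly s2 x ^ 2) / (poly D x * (poly s2 x * poly s2 x))"
    by (simp only: e)
  also have "\<dots> = (poly bb x + poly cc x * (poly s1 x / poly s2 x)) / poly D x"
    using s2x Dx by (simp add: field_simps power2_eq_square)
  finally have "(poly (pderiv s1) x * poly s2 x - poly s1 x * poly (pderiv s2) x) / (poly s2 x * poly s2 x) =
        (poly bb x + poly cc x * (poly s1 x / poly s2 x)) / poly D x" .
  with d show ?thesis by simp
qed

lemma final_iff:
  fixes D bb cc :: "real poly" and r \<rho> f :: "real \<Rightarrow> real"
  assumes ab: "a < b" and Dn: "\<forall>x\<in>{a<..<b}. poly D x \<noteq> 0"
    and rd: "\<forall>x\<in>{a<..<b}. (r has_real_derivative (poly bb x + poly cc x * r x) / poly D x) (at x)"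
    and \<rho>d: "\<forall>x\<in>{a<..<b}. (\<rho> has_real_derivative (poly cc x * \<rho> x) / poly D x) (at x) \<and> \<rho> x \<noteq> 0"
  shows "(\<forall>x\<in>{a<..<b}. \<exists>d. (f has_real_derivative d) (at x) \<and> poly D x * d = poly bb x + poly cc x * f x)
         \<longleftrightarrow> (\<exists>\<sigma>. \<forall>x\<in>{a<..<b}. f x = r x + \<sigma> * \<rho> x)"
proof
  assume H: "\<forall>x\<in>{a<..<b}. \<exists>d. (f has_real_derivative d) (at x) \<and> poly D x * d = poly bb x + poly cc x * f x"
  define u where "u t = (f t - r t) / \<rho> t" for t
  have du: "(u has_real_derivative 0) (at x within {a<..<b})" if x: "x \<in> {a<..<b}" for x
  proof -
    obtain d where fd: "(f has_real_derivative d) (at x)" and rel: "poly D x * d = poly bb x + poly cc x * f x"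
      using H x by blast
    have r': "(r has_real_derivative (poly bb x + poly cc x * r x) / poly D x) (at x)" using rd x by blast
    have p': "(\<rho> has_real_derivative (poly cc x * \<rho> x) / poly D x) (at x)" and p0: "\<rho> x \<noteq> 0" using \<rho>d x by auto
    have Dx: "poly D x \<noteq> 0" using Dn x by blast
    have "(u has_real_derivative ((d - (poly bb x + poly cc x * r x) / poly D x) * \<rho> x - (f x - r x) * ((poly cc x * \<rho> x) / poly D x)) / (\<rho> x * \<rho> x)) (at x)"
      unfolding u_def[abs_def] by (rule DERIV_divide[OF DERIV_diff[OF fd r'] p' p0])
    moreover have "d = (poly bb x + poly cc x * f x) / poly D x" using rel Dx by (simp add: field_simps)
    ultimately have "(u has_real_derivative 0) (at x)" using Dx p0
      by (simp add: field_simps)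
    thus ?thesis by (rule has_field_derivative_at_within)
  qed
  obtain \<sigma> where "\<forall>x\<in>{a<..<b}. u x = \<sigma>"
    using has_field_derivative_zero_constant[of "{a<..<b}" u] du by auto
  hence "\<forall>x\<in>{a<..<b}. f x = r x + \<sigma> * \<rho> x" using \<rho>d by (auto simp: u_def field_simps)
  thus "\<exists>\<sigma>. \<forall>x\<in>{a<..<b}. f x = r x + \<sigma> * \<rho> x" by blast
next
  assume "\<exists>\<sigma>. \<forall>x\<in>{a<..<b}. f x = r x + \<sigma> * \<rho> x"
  then obtain \<sigma> where fe: "\<forall>x\<in>{a<..<b}. f x = r x + \<sigma> * \<rho> x" by blast
  show "\<forall>x\<in>{a<..<b}. \<exists>d. (f has_real_derivative d) (at x) \<and> poly D x * d = poly bb x + poly cc x * f x"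
  proof
    fix x assume x: "x \<in> {a<..<b}"
    have r': "(r has_real_derivative (poly bb x + poly cc x * r x) / poly D x) (at x)" using rd x by blast
    have p': "(\<rho> has_real_derivative (poly cc x * \<rho> x) / poly D x) (at x)" using \<rho>d x by auto
    have Dx: "poly D x \<noteq> 0" using Dn x by blast
    have "((\<lambda>t. r t + \<sigma> * \<rho> t) has_real_derivative (poly bb x + poly cc x * r x) / poly D x + \<sigma> * ((poly cc x * \<rho> x) / poly D x)) (at x)"
      by (intro DERIV_add r' DERIV_cmult p')
    hence fd: "(f has_real_derivative (poly bb x + poly cc x * r x) / poly D x + \<sigma> * ((poly cc x * \<rho> x) / poly D x)) (at x)"
      by (rule has_field_derivative_transform_within_open[where S="{a<..<b}"]) (use x fe in auto)
    have "poly D x * ((poly bb x + poly cc x * r x) / poly D x + \<sigma> * ((poly cc x * \<rho> x) / poly D x)) = poly bb x + poly cc x * f x"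
      using Dx fe x by (simp add: field_simps)
    with fd show "\<exists>d. (f has_real_derivative d) (at x) \<and> poly D x * d = poly bb x + poly cc x * f x" by blast
  qed
qed

lemma ode_iff:
  assumes adm: "admissible qA pB qB a b"
  shows "ode_solution pA qA pB qB {a<..<b} f \<longleftrightarrow>
     (\<forall>x\<in>{a<..<b}. \<exists>d. (f has_real_derivative d) (at x) \<and> poly (qA * pB) x * d = poly (qA * qB) x + poly (-(pA * qB)) x * f x)"
proof -
  have eq: "f x * rat_eval pA qA x + d * rat_eval pB qB x = 1 \<longleftrightarrow> poly (qA * pB) x * d = poly (qA * qB) x + poly (-(pA * qB)) x * f x"
    if x: "x \<in> {a<..<b}" for x d
  proof -
    have n: "poly qA x \<noteq> 0" "poly pB x \<noteq> 0" "poly qB x \<noteq> 0" using adm x by (auto simp: admissible_def)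
    have "f x * rat_eval pA qA x + d * rat_eval pB qB x = 1 \<longleftrightarrow>
          poly qA x * poly qB x * (f x * rat_eval pA qA x + d * rat_eval pB qB x) = poly qA x * poly qB x"
      using n by auto
    also have "poly qA x * poly qB x * (f x * rat_eval pA qA x + d * rat_eval pB qB x) = f x * poly pA x * poly qB x + d * poly pB x * poly qA x"
      using n by (simp add: rat_eval_def field_simps)
    finally show ?thesis by (auto simp: algebra_simps)
  qed
  show ?thesis unfolding ode_solution_def using eq by blast
qed



lemma idR:
  fixes D bb cc a1 a0 :: "real poly" and k :: nat
  assumes H: "a1 * (D * pderiv a0 + of_nat (Suc k) * bb * a1 + of_nat k * cc * a0) = (D * pderiv a1 + of_nat (Suc k) * cc * a1) * a0"
  shows "D * (pderiv (- a0) * (of_nat (Suc k) * a1) - (- a0) * pderiv (of_nat (Suc k) * a1)) = cc * (- a0) * (of_nat (Suc k) * a1) + bb * (of_nat (Suc k) * a1)^2"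
proof -
  have pd: "pderiv (of_nat (Suc k) * a1) = of_nat (Suc k) * pderiv a1" by (simp add: pderiv_mult del: of_nat_Suc)
  define n :: "real poly" where "n = of_nat k"
  have s: "(of_nat (Suc k) :: real poly) = n + 1" by (simp add: n_def)
  show ?thesis using H unfolding pd pderiv_minus unfolding s n_def[symmetric] by algebra
qed

lemma nonvan_pair:
  fixes s t E :: "real poly"
  assumes "s \<noteq> 0" "s dvd E * t * pderiv s" "poly E x \<noteq> 0" "poly t x \<noteq> 0"
  shows "poly s x \<noteq> 0"
  using nonvan[of s "E * t" x] assms by (simp add: mult.assoc)

lemma root_chain:
  fixes t1 t2 D cc :: "real poly" and m :: nat
  assumes IQ: "D * (pderiv t1 * t2 - t1 * pderiv t2) = of_nat m * cc * t1 * t2"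
    and m: "m \<ge> 1" and t1x: "poly t1 x \<noteq> 0" and t2x: "poly t2 x \<noteq> 0" and Dx: "poly D x \<noteq> 0"
  shows "((\<lambda>t. root m (poly t1 t / poly t2 t)) has_real_derivative (poly cc x * root m (poly t1 x / poly t2 x)) / poly D x) (at x)
         \<and> root m (poly t1 x / poly t2 x) \<noteq> 0"
proof -
  define z where "z = poly t1 x / poly t2 x"
  have z0: "z \<noteq> 0" using t1x t2x by (simp add: z_def)
  have dq: "((\<lambda>t. poly t1 t / poly t2 t) has_real_derivative (poly (pderiv t1) x * poly t2 x - poly t1 x * poly (pderiv t2) x) / (poly t2 x * poly t2 x)) (at x)"
    by (rule DERIV_divide[OF poly_DERIV poly_DERIV t2x])
  have e: "poly D x * (poly (pderiv t1) x * poly t2 x - poly t1 x * poly (pderiv t2) x) = of_nat m * poly cc x * poly t1 x * poly t2 x"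
    using arg_cong[OF IQ, of "\<lambda>p. poly p x"] by (simp add: of_nat_poly)
  have dr: "(root m has_real_derivative root m z / (of_nat m * z)) (at z)"
    using root_deriv[of m z] m z0 by simp
  have D1: "((\<lambda>t. root m (poly t1 t / poly t2 t)) has_real_derivative root m z / (of_nat m * z) * ((poly (pderiv t1) x * poly t2 x - poly t1 x * poly (pderiv t2) x) / (poly t2 x * poly t2 x))) (at x)"
    using DERIV_chain2[OF dr[unfolded z_def] dq] by (simp add: z_def)
  have "root m z / (of_nat m * z) * ((poly (pderiv t1) x * poly t2 x - poly t1 x * poly (pderiv t2) x) / (poly t2 x * poly t2 x))
       = root m z / (of_nat m * z) * ((poly D x * (poly (pderiv t1) x * poly t2 x - poly t1 x * poly (pderiv t2) x)) / (poly D x * (poly t2 x * poly t2 x)))"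
    using Dx by simp
  also have "\<dots> = root m z / (of_nat m * z) * ((of_nat m * poly cc x * poly t1 x * poly t2 x) / (poly D x * (poly t2 x * poly t2 x)))"
    by (simp only: e)
  also have "\<dots> = (poly cc x * root m z) / poly D x"
    using Dx t1x t2x m by (simp add: z_def field_simps)
  finally have eq: "root m z / (of_nat m * z) * ((poly (pderiv t1) x * poly t2 x - poly t1 x * poly (pderiv t2) x) / (poly t2 x * poly t2 x)) = (poly cc x * root m z) / poly D x" .
  have "((\<lambda>t. root m (poly t1 t / poly t2 t)) has_real_derivative (poly cc x * root m z) / poly D x) (at x)"
    using D1 unfolding eq .
  moreover have "root m z \<noteq> 0" using z0 m by simp
  ultimately show ?thesis by (simp add: z_def)
qed

theorem lemma1:
  fixes pA qA pB qB :: "real poly"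
  assumes "qA \<noteq> 0" and "qB \<noteq> 0" and "pB \<noteq> 0"
    and "\<forall>a b f. admissible qA pB qB a b \<and> ode_solution pA qA pB qB {a<..<b} f
                  \<longrightarrow> algebraic_on {a<..<b} f"
  shows "\<exists>(N::nat) r1 r2 q1 q2. N \<ge> 1 \<and> r2 \<noteq> 0 \<and> q2 \<noteq> 0 \<and>
           (\<forall>a b. admissible qA pB qB a b \<longrightarrow>
              (\<forall>f. ode_solution pA qA pB qB {a<..<b} f \<longleftrightarrow>
                   (\<exists>\<sigma>::real. \<forall>x\<in>{a<..<b}.
                       f x = rat_eval r1 r2 x + \<sigma> * root N (rat_eval q1 q2 x))))"
proof -
  note hyp = assms(4)
  define D where "D = qA * pB"
  define bb where "bb = qA * qB"
  define cc where "cc = - (pA * qB)"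
  have D0: "D \<noteq> 0" using assms by (simp add: D_def)
  have admD: "poly D x \<noteq> 0" if "admissible qA pB qB a b" "x \<in> {a<..<b}" for a b x
    using that by (auto simp: admissible_def D_def)
  have odeI: "ode_solution pA qA pB qB {a<..<b} f \<longleftrightarrow>
     (\<forall>x\<in>{a<..<b}. \<exists>d. (f has_real_derivative d) (at x) \<and> poly D x * d = poly bb x + poly cc x * f x)"
    if "admissible qA pB qB a b" for a b f
    using ode_iff[OF that] by (simp add: D_def bb_def cc_def)
  define Z where "Z = {x. poly (D * qB) x = 0}"
  have fZ: "finite Z" unfolding Z_def using D0 assms(2) by (intro poly_roots_finite) simp
  define a0 where "a0 = Max (insert 0 Z)"
  have nz: "poly D x \<noteq> 0 \<and> poly qB x \<noteq> 0" if "x > a0" for x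
  proof -
    have "x \<notin> Z"
    proof
      assume "x \<in> Z" hence "x \<le> a0" unfolding a0_def using fZ by (intro Max_ge) auto
      with that show False by simp
    qed
    thus ?thesis by (simp add: Z_def)
  qed
  define c where "c = a0 + 1"
  define d where "d = a0 + 2"
  have cd: "c < d" by (simp add: c_def d_def)
  have admcd: "admissible qA pB qB c d"
    using nz cd by (auto simp: admissible_def D_def c_def d_def)
  have Dcd: "poly D x \<noteq> 0" if "x \<in> {c..d}" for x using nz that by (auto simp: c_def)
  define gf where "gf t = poly cc t / poly D t" for t
  define bf where "bf t = poly bb t / poly D t" for t
  have cg: "continuous_on {c..d} gf" unfolding gf_def using Dcd
    by (intro continuous_intros) auto
  have cb: "continuous_on {c..d} bf" unfolding bf_def using Dcd
    by (intro continuous_intros) auto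
  obtain h0 f1 where sol: "\<forall>x\<in>{c<..<d}. (h0 has_real_derivative gf x * h0 x) (at x) \<and> h0 x > 0 \<and>
            (f1 has_real_derivative gf x * f1 x + bf x) (at x)"
    using exist_sol[OF cd cg cb] by blast
  have Dcd': "poly D x \<noteq> 0" if "x \<in> {c<..<d}" for x using Dcd that by auto
  have f1rel: "\<forall>x\<in>{c<..<d}. \<exists>dd. (f1 has_real_derivative dd) (at x) \<and> poly D x * dd = poly bb x + poly cc x * f1 x"
  proof
    fix x assume x: "x \<in> {c<..<d}"
    have "poly D x * (gf x * f1 x + bf x) = poly bb x + poly cc x * f1 x"
      using Dcd'[OF x] by (simp add: gf_def bf_def field_simps)
    thus "\<exists>dd. (f1 has_real_derivative dd) (at x) \<and> poly D x * dd = poly bb x + poly cc x * f1 x"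
      using sol x by blast
  qed
  have "algebraic_on {c<..<d} f1" using hyp admcd odeI[OF admcd] f1rel by blast
  then obtain P0 where P0: "P0 \<noteq> 0" "\<forall>x\<in>{c<..<d}. eval2 P0 x (f1 x) = 0" unfolding algebraic_on_def by blast
  have "vs f1 c d P0" unfolding vs_def using P0 cd by blast
  then obtain P where vP: "vs f1 c d P" and mP: "\<forall>Q. vs f1 c d Q \<longrightarrow> degree P \<le> degree Q" by (rule ex_min)
  have MI: "degree P \<ge> 1 \<and> (\<forall>k. coeff P (degree P) * (D * pderiv (coeff P k) + of_nat (Suc k) * bb * coeff P (Suc k) + of_nat k * cc * coeff P k) = (D * pderiv (coeff P (degree P)) + of_nat (degree P) * cc * coeff P (degree P)) * coeff P k)"
    by (rule min_ident[OF f1rel vP mP])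
  obtain k where mk: "degree P = Suc k" using MI by (cases "degree P") auto
  define r1 where "r1 = - coeff P k"
  define r2 where "r2 = of_nat (Suc k) * coeff P (Suc k)"
  have IR0: "D * (pderiv r1 * r2 - r1 * pderiv r2) = cc * r1 * r2 + bb * r2^2"
    unfolding r1_def r2_def by (rule idR) (use MI mk in metis)
  have Pn0: "P \<noteq> 0" using vP by (simp add: vs_def)
  have lc: "coeff P (Suc k) \<noteq> 0" using Pn0 mk by (metis leading_coeff_0_iff)
  have r20: "r2 \<noteq> 0"
  proof
    assume "r2 = 0"
    hence "coeff r2 0 = 0" by simp
    hence "coeff (smult (of_nat (Suc k)) (coeff P (Suc k))) 0 = 0 \<and> smult (of_nat (Suc k)) (coeff P (Suc k)) = 0"
      using \<open>r2 = 0\<close> by (simp add: r2_def of_nat_poly)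
    with lc show False by simp
  qed
  obtain s1 s2 where s20: "s2 \<noteq> 0" and Es: "s1 * r2 = s2 * r1" and "r1 \<noteq> 0 \<Longrightarrow> s1 \<noteq> 0" and ncs: "\<And>x. \<not> (poly s1 x = 0 \<and> poly s2 x = 0)"
    using minpair[where u=r1, OF r20] by metis
  have IR: "D * (pderiv s1 * s2 - s1 * pderiv s2) = cc * s1 * s2 + bb * s2^2"
  proof -
    have W: "r2^2 * (pderiv s1 * s2 - s1 * pderiv s2) = s2^2 * (pderiv r1 * r2 - r1 * pderiv r2)"
      by (rule wronsk_transfer[OF Es])
    have "r2^2 * (D * (pderiv s1 * s2 - s1 * pderiv s2)) = r2^2 * (cc * s1 * s2 + bb * s2^2)"
      using W IR0 Es by algebra
    thus ?thesis using r20 by simp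
  qed
  have s2nz: "poly s2 x \<noteq> 0" if "poly D x \<noteq> 0" for x
  proof
    assume s2x: "poly s2 x = 0"
    hence s1x: "poly s1 x \<noteq> 0" using ncs by blast
    have "s2 dvd D * s1 * pderiv s2"
    proof
      show "D * s1 * pderiv s2 = s2 * (D * pderiv s1 - cc * s1 - bb * s2)"
        using IR by (simp add: algebra_simps power2_eq_square)
    qed
    from nonvan_pair[OF s20 this that s1x] s2x show False by simp
  qed
  define r where "r t = poly s1 t / poly s2 t" for t
  have rd: "(r has_real_derivative (poly bb x + poly cc x * r x) / poly D x) (at x)" if "poly D x \<noteq> 0" for x
    unfolding r_def[abs_def] using rat_deriv[OF IR s2nz[OF that] that] by (simp add: r_def)
  define f2 where "f2 t = r t + h0 t" for t
  have f2rel: "\<forall>x\<in>{c<..<d}. \<exists>dd. (f2 has_real_derivative dd) (at x) \<and> poly D x * dd = poly bb x + poly cc x * f2 x"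
  proof
    fix x assume x: "x \<in> {c<..<d}"
    have Dx: "poly D x \<noteq> 0" using Dcd'[OF x] .
    have "(f2 has_real_derivative (poly bb x + poly cc x * r x) / poly D x + gf x * h0 x) (at x)"
      unfolding f2_def[abs_def] using DERIV_add[OF rd[OF Dx]] sol x by blast
    moreover have "poly D x * ((poly bb x + poly cc x * r x) / poly D x + gf x * h0 x) = poly bb x + poly cc x * f2 x"
      using Dx by (simp add: gf_def f2_def field_simps)
    ultimately show "\<exists>dd. (f2 has_real_derivative dd) (at x) \<and> poly D x * dd = poly bb x + poly cc x * f2 x" by blast
  qed
  have "algebraic_on {c<..<d} f2" using hyp admcd odeI[OF admcd] f2rel by blast
  then obtain P2 where P2: "P2 \<noteq> 0" "\<forall>x\<in>{c<..<d}. eval2 P2 x (f2 x) = 0" unfolding algebraic_on_def by blast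
  have s2cd: "\<forall>x\<in>{c<..<d}. poly s2 x \<noteq> 0" using s2nz Dcd' by blast
  obtain Q where Q: "Q \<noteq> 0" "\<forall>x\<in>{c<..<d}. eval2 Q x (f2 x - poly s1 x / poly s2 x) = 0"
    using subst_alg[OF P2(1) s20 P2(2) s2cd, of s1] by blast
  have "\<forall>x\<in>{c<..<d}. eval2 Q x (h0 x) = 0" using Q(2) by (simp add: f2_def r_def)
  hence "vs h0 c d Q" unfolding vs_def using Q(1) cd by blast
  then obtain P3 where vP3: "vs h0 c d P3" and mP3: "\<forall>Q. vs h0 c d Q \<longrightarrow> degree P3 \<le> degree Q" by (rule ex_min)
  have h0rel: "\<forall>x\<in>{c<..<d}. \<exists>dd. (h0 has_real_derivative dd) (at x) \<and> poly D x * dd = poly 0 x + poly cc x * h0 x"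
  proof
    fix x assume x: "x \<in> {c<..<d}"
    have "poly D x * (gf x * h0 x) = poly 0 x + poly cc x * h0 x"
      using Dcd'[OF x] by (simp add: gf_def field_simps)
    thus "\<exists>dd. (h0 has_real_derivative dd) (at x) \<and> poly D x * dd = poly 0 x + poly cc x * h0 x"
      using sol x by blast
  qed
  have MI3: "degree P3 \<ge> 1 \<and> (\<forall>k. coeff P3 (degree P3) * (D * pderiv (coeff P3 k) + of_nat (Suc k) * 0 * coeff P3 (Suc k) + of_nat k * cc * coeff P3 k) = (D * pderiv (coeff P3 (degree P3)) + of_nat (degree P3) * cc * coeff P3 (degree P3)) * coeff P3 k)"
    by (rule min_ident[OF h0rel vP3 mP3])
  define m where "m = degree P3"
  define u0 where "u0 = coeff P3 0"
  define um where "um = coeff P3 m"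
  have m1: "m \<ge> 1" using MI3 by (simp add: m_def)
  have u00: "u0 \<noteq> 0" unfolding u0_def
    by (rule a0_nonzero[OF vP3 mP3]) (use sol MI3 in auto)
  have um0: "um \<noteq> 0" using vP3 by (simp add: vs_def um_def m_def)
  have IQ0: "D * (pderiv u0 * um - u0 * pderiv um) = of_nat m * cc * u0 * um"
  proof -
    have H0: "coeff P3 (degree P3) * (D * pderiv (coeff P3 0) + of_nat (Suc 0) * 0 * coeff P3 (Suc 0) + of_nat 0 * cc * coeff P3 0) = (D * pderiv (coeff P3 (degree P3)) + of_nat (degree P3) * cc * coeff P3 (degree P3)) * coeff P3 0"
      using MI3 by blast
    have "um * (D * pderiv u0) = (D * pderiv um + of_nat m * cc * um) * u0"
      using H0 unfolding u0_def um_def m_def by simp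
    thus ?thesis by (simp add: algebra_simps)
  qed
  obtain t1 t2 where t20: "t2 \<noteq> 0" and Et: "t1 * um = t2 * u0" and t10': "u0 \<noteq> 0 \<Longrightarrow> t1 \<noteq> 0"
      and nct: "\<And>x. \<not> (poly t1 x = 0 \<and> poly t2 x = 0)"
    using minpair[where u=u0, OF um0] by metis
  have t10: "t1 \<noteq> 0" using t10' u00 by blast
  have IQ: "D * (pderiv t1 * t2 - t1 * pderiv t2) = of_nat m * cc * t1 * t2"
  proof -
    have W: "um^2 * (pderiv t1 * t2 - t1 * pderiv t2) = t2^2 * (pderiv u0 * um - u0 * pderiv um)"
      by (rule wronsk_transfer[OF Et])
    have "um^2 * (D * (pderiv t1 * t2 - t1 * pderiv t2)) = um^2 * (of_nat m * cc * t1 * t2)"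
      using W IQ0 Et by algebra
    thus ?thesis using um0 by simp
  qed
  have t2nz: "poly t2 x \<noteq> 0" if "poly D x \<noteq> 0" for x
  proof
    assume tx: "poly t2 x = 0"
    hence t1x: "poly t1 x \<noteq> 0" using nct by blast
    have "t2 dvd D * t1 * pderiv t2"
    proof
      show "D * t1 * pderiv t2 = t2 * (D * pderiv t1 - of_nat m * cc * t1)"
        using IQ by (simp add: algebra_simps)
    qed
    from nonvan_pair[OF t20 this that t1x] tx show False by simp
  qed
  have t1nz: "poly t1 x \<noteq> 0" if "poly D x \<noteq> 0" for x
  proof
    assume tx: "poly t1 x = 0"
    hence t2x: "poly t2 x \<noteq> 0" using nct by blast
    have "t1 dvd D * t2 * pderiv t1"
    proof
      show "D * t2 * pderiv t1 = t1 * (D * pderiv t2 + of_nat m * cc * t2)"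
        using IQ by (simp add: algebra_simps)
    qed
    from nonvan_pair[OF t10 this that t2x] tx show False by simp
  qed
  show ?thesis
  proof (intro exI conjI allI impI)
    show "1 \<le> m" by (rule m1)
    show "s2 \<noteq> 0" by (rule s20)
    show "t2 \<noteq> 0" by (rule t20)
    fix a b f assume adm: "admissible qA pB qB a b"
    have ab: "a < b" using adm by (simp add: admissible_def)
    have Dn: "\<forall>x\<in>{a<..<b}. poly D x \<noteq> 0" using admD[OF adm] by blast
    have rd': "\<forall>x\<in>{a<..<b}. (r has_real_derivative (poly bb x + poly cc x * r x) / poly D x) (at x)"
      using rd Dn by blast
    have \<rho>d: "\<forall>x\<in>{a<..<b}. ((\<lambda>t. root m (rat_eval t1 t2 t)) has_real_derivative (poly cc x * root m (rat_eval t1 t2 x)) / poly D x) (at x) \<and> root m (rat_eval t1 t2 x) \<noteq> 0"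
      using root_chain[OF IQ m1 t1nz t2nz] Dn unfolding rat_eval_def by blast
    show "ode_solution pA qA pB qB {a<..<b} f =
          (\<exists>\<sigma>. \<forall>x\<in>{a<..<b}. f x = rat_eval s1 s2 x + \<sigma> * root m (rat_eval t1 t2 x))"
      unfolding odeI[OF adm] final_iff[OF ab Dn rd' \<rho>d] by (simp add: r_def rat_eval_def)
  qed
qed


end
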